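(* Under the hypotheses of the following setting: $\{e_n\}_{n\in\mathbb{Z}}$ i.i.d. real random variables with a continuous, bounded, strictly positive density on $\mathbb{R}$; $q,d\ge1$ integers; $r,\mu_1,\mu_2,\phi_i,\psi_i\in\mathbb{R}$; and $\{y_n\}_{n\in\mathbb{Z}}$ the unique strictly stationary solution of $$y_n=\begin{cases}\mu_1+e_n+\sum_{i=1}^q\phi_ie_{n-i}, & \text{if } y_{n-d}\le r,\\ \mu_2+e_n+\sum_{i=1}^q\psi_ie_{n-i}, & \text{if } y_{n-d}>r,\end{cases}$$ there exists $\rho\in(0,1)$ such that for all $-\infty\le u_1<u_2\le\infty$ and $-\infty\le v_1<v_2\le\infty$, $$\operatorname{Cov}\big(\mathbb{1}(u_1<y_0\le u_2),\ \mathbb{1}(v_1<y_k\le v_2)\big)=O(\rho^k)\quad\text{as } k\to\infty.$$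
   Context: $\mathbb{1}(\cdot)$ denotes the indicator function. A solution means a process on the same probability space as $\{e_n\}$ satisfying the equation almost surely for every $n$. *)

theory Defs
  imports "HOL-Probability.Probability" "HOL-Library.Landau_Symbols"
begin

definition covariance :: "'a measure \<Rightarrow> ('a \<Rightarrow> real) \<Rightarrow> ('a \<Rightarrow> real) \<Rightarrow> real" where
  "covariance M X Y =
     (LINT \<omega>|M. (X \<omega> - (LINT \<eta>|M. X \<eta>)) * (Y \<omega> - (LINT \<eta>|M. Y \<eta>)))"

definition strictly_stationary :: "'a measure \<Rightarrow> (int \<Rightarrow> 'a \<Rightarrow> real) \<Rightarrow> bool" where
  "strictly_stationary M X \<longleftrightarrow>
     (\<forall>S h. finite S \<longrightarrow>
        distr M (PiM S (\<lambda>_. borel)) (\<lambda>\<omega>. \<lambda>n\<in>S. X (n + h) \<omega>) =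
        distr M (PiM S (\<lambda>_. borel)) (\<lambda>\<omega>. \<lambda>n\<in>S. X n \<omega>))"

definition ind_interval :: "ereal \<Rightarrow> ereal \<Rightarrow> real \<Rightarrow> real" where
  "ind_interval u1 u2 x = (if u1 < ereal x \<and> ereal x \<le> u2 then 1 else 0)"

end

theory Submission
  imports Defs
begin


locale tma =
  fixes mu1 mu2 :: real and phi psi :: "nat \<Rightarrow> real" and q d :: nat and r :: real
begin

definition Y1 :: "(int \<Rightarrow> real) \<Rightarrow> int \<Rightarrow> real" where
  "Y1 x t = mu1 + x t + (\<Sum>i=1..q. phi i * x (t - int i))"
definition Y2 :: "(int \<Rightarrow> real) \<Rightarrow> int \<Rightarrow> real" where
  "Y2 x t = mu2 + x t + (\<Sum>i=1..q. psi i * x (t - int i))"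
definition K0 :: real where
  "K0 = \<bar>mu1\<bar> + \<bar>mu2\<bar> + (\<Sum>i=1..q. \<bar>phi i\<bar> + \<bar>psi i\<bar>)"
definition Dc :: "(int \<Rightarrow> real) \<Rightarrow> int \<Rightarrow> bool" where
  "Dc x t \<longleftrightarrow> x t \<le> r - K0 \<and> (\<forall>i\<in>{1..q}. \<bar>x (t - int i)\<bar> \<le> 1)"

primrec reg :: "(int \<Rightarrow> real) \<Rightarrow> int \<Rightarrow> nat \<Rightarrow> bool" where
  "reg x t 0 = True"
| "reg x t (Suc i) = ((if reg x t i then Y1 x (t + int (Suc i) * int d) else Y2 x (t + int (Suc i) * int d)) \<le> r)"

definition val :: "(int \<Rightarrow> real) \<Rightarrow> int \<Rightarrow> nat \<Rightarrow> real" where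
  "val x t i = (if reg x t i then Y1 x (t + int (Suc i) * int d) else Y2 x (t + int (Suc i) * int d))"

definition Dm :: nat where "Dm = d * (q + 1)"

primrec A :: "(int \<Rightarrow> real) \<Rightarrow> int \<Rightarrow> nat \<Rightarrow> nat \<Rightarrow> real" where
  "A x n 0 k = 0"
| "A x n (Suc m) k = (if Dc x (n - int k * int Dm) then val x (n - int k * int Dm) (k * (q + 1) - 1)
                      else A x n m (Suc k))"

definition badf :: "(int \<Rightarrow> real) \<Rightarrow> int \<Rightarrow> nat \<Rightarrow> bool" where
  "badf x n N \<longleftrightarrow> (\<forall>j\<in>{1..N}. \<not> Dc x (n - int j * int Dm))"

lemma sum_abs_le: "\<bar>\<Sum>i=1..q. c i * x (t - int i)\<bar> \<le> (\<Sum>i=1..q. \<bar>c i\<bar>)"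
  if "\<forall>i\<in>{1..q}. \<bar>x (t - int i)\<bar> \<le> 1" for c :: "nat \<Rightarrow> real"
proof -
  have "\<bar>\<Sum>i=1..q. c i * x (t - int i)\<bar> \<le> (\<Sum>i=1..q. \<bar>c i * x (t - int i)\<bar>)"
    by (rule sum_abs)
  also have "\<dots> \<le> (\<Sum>i=1..q. \<bar>c i\<bar>)"
  proof (rule sum_mono)
    fix i assume "i \<in> {1..q}"
    then have "\<bar>x (t - int i)\<bar> \<le> 1" using that by auto
    then show "\<bar>c i * x (t - int i)\<bar> \<le> \<bar>c i\<bar>"
      by (simp add: abs_mult mult_left_le)
  qed
  finally show ?thesis .
qed

lemma Dc_le: assumes "Dc x t" shows "Y1 x t \<le> r" "Y2 x t \<le> r"
proof -
  have h: "\<forall>i\<in>{1..q}. \<bar>x (t - int i)\<bar> \<le> 1" "x t \<le> r - K0" using assms by (auto simp: Dc_def)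
  have s1: "\<bar>\<Sum>i=1..q. phi i * x (t - int i)\<bar> \<le> (\<Sum>i=1..q. \<bar>phi i\<bar>)" by (rule sum_abs_le[OF h(1)])
  have s2: "\<bar>\<Sum>i=1..q. psi i * x (t - int i)\<bar> \<le> (\<Sum>i=1..q. \<bar>psi i\<bar>)" by (rule sum_abs_le[OF h(1)])
  have "K0 = \<bar>mu1\<bar> + \<bar>mu2\<bar> + (\<Sum>i=1..q. \<bar>phi i\<bar>) + (\<Sum>i=1..q. \<bar>psi i\<bar>)"
    by (simp add: K0_def sum.distrib)
  moreover have "0 \<le> (\<Sum>i=1..q. \<bar>phi i\<bar>)" "0 \<le> (\<Sum>i=1..q. \<bar>psi i\<bar>)" by (auto intro: sum_nonneg)
  ultimately show "Y1 x t \<le> r" "Y2 x t \<le> r" using h s1 s2 unfolding Y1_def Y2_def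
    by (auto simp: abs_le_iff)
qed

lemma det1:
  assumes rec: "\<And>n. yy n = (if yy (n - int d) \<le> r then Y1 x n else Y2 x n)"
    and D: "Dc x t"
  shows "yy (t + int (Suc i) * int d) = val x t i \<and> (yy (t + int (Suc i) * int d) \<le> r \<longleftrightarrow> reg x t (Suc i))"
proof (induction i)
  case 0
  have "yy t \<le> r" using rec[of t] Dc_le[OF D] by auto
  then have "yy (t + int d) = Y1 x (t + int d)" using rec[of "t + int d"] by simp
  then show ?case by (simp add: val_def)
next
  case (Suc i)
  have eq: "t + int (Suc (Suc i)) * int d - int d = t + int (Suc i) * int d" by (simp add: algebra_simps)
  have "yy (t + int (Suc (Suc i)) * int d) = val x t (Suc i)"
    using rec[of "t + int (Suc (Suc i)) * int d"] Suc unfolding eq by (simp add: val_def)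
  then show ?case by (simp add: val_def)
qed

lemma det2:
  assumes rec: "\<And>n. yy n = (if yy (n - int d) \<le> r then Y1 x n else Y2 x n)"
  shows "1 \<le> k \<Longrightarrow> (\<exists>j. k \<le> j \<and> j < k + m \<and> Dc x (n - int j * int Dm)) \<Longrightarrow> A x n m k = yy n"
proof (induction m arbitrary: k)
  case 0 then show ?case by auto
next
  case (Suc m)
  show ?case
  proof (cases "Dc x (n - int k * int Dm)")
    case True
    have kk: "Suc (k * (q + 1) - 1) = k * (q+1)" using Suc.prems(1) by (simp add: Suc_le_eq)
    have "n - int k * int Dm + int (Suc (k * (q + 1) - 1)) * int d = n"
      unfolding kk Dm_def by (simp add: algebra_simps)
    then show ?thesis using det1[OF rec True, of "k * (q + 1) - 1"] True by simp
  next
    case False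
    then have "\<exists>j. Suc k \<le> j \<and> j < Suc k + m \<and> Dc x (n - int j * int Dm)"
      using Suc.prems(2) by (metis Suc_leI add_Suc_shift le_neq_implies_less)
    then show ?thesis using False Suc.IH[of "Suc k"] by simp
  qed
qed


lemma Y_local: assumes "\<forall>s. t - int q \<le> s \<and> s \<le> t \<longrightarrow> x s = x' s"
  shows "Y1 x t = Y1 x' t" "Y2 x t = Y2 x' t" "Dc x t = Dc x' t"
proof -
  have "\<forall>i\<in>{1..q}. x (t - int i) = x' (t - int i)" using assms by auto
  moreover have "x t = x' t" using assms by auto
  ultimately show "Y1 x t = Y1 x' t" "Y2 x t = Y2 x' t" "Dc x t = Dc x' t"
    unfolding Y1_def Y2_def Dc_def by (auto intro!: sum.cong)
qed

lemma reg_Suc_val: "reg x t (Suc i) = (val x t i \<le> r)" by (simp add: val_def)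

lemma reg_local: "(\<forall>s. t - int q \<le> s \<and> s \<le> t + int (Suc i) * int d \<longrightarrow> x s = x' s) \<Longrightarrow>
   reg x t i = reg x' t i \<and> val x t i = val x' t i"
proof (induction i)
  case 0
  have "\<forall>s. (t + int d) - int q \<le> s \<and> s \<le> t + int d \<longrightarrow> x s = x' s" using 0 by auto
  from Y_local[OF this] show ?case by (simp add: val_def)
next
  case (Suc i)
  have "\<forall>s. t - int q \<le> s \<and> s \<le> t + int (Suc i) * int d \<longrightarrow> x s = x' s"
    using Suc.prems by (auto simp: algebra_simps)
  note ih = Suc.IH[OF this]
  have "\<forall>s. (t + int (Suc (Suc i)) * int d) - int q \<le> s \<and> s \<le> t + int (Suc (Suc i)) * int d \<longrightarrow> x s = x' s"
    using Suc.prems by (smt (verit) mult_nonneg_nonneg of_nat_0_le_iff)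
  note Y = Y_local[OF this]
  have r: "reg x t (Suc i) = reg x' t (Suc i)" using ih by (simp only: reg_Suc_val)
  have "val x t (Suc i) = val x' t (Suc i)" using Y by (simp add: val_def r del: reg.simps)
  then show ?case using r by simp
qed

lemma A_local: "1 \<le> k \<Longrightarrow> (\<forall>s. n - int ((k + m - 1) * Dm) - int q \<le> s \<and> s \<le> n \<longrightarrow> x s = x' s) \<Longrightarrow>
   A x n m k = A x' n m k"
proof (induction m arbitrary: k)
  case 0 then show ?case by simp
next
  case (Suc m)
  have kk: "int (Suc (k * (q + 1) - 1)) = int k * int (q+1)" using Suc.prems(1) by (cases k) (auto simp: algebra_simps)
  have nn: "n - int k * int Dm + int (Suc (k * (q + 1) - 1)) * int d = n"
    unfolding kk Dm_def by (simp add: algebra_simps)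
  have le: "int (k * Dm) \<le> int ((k + Suc m - 1) * Dm)" by (simp only: of_nat_le_iff) simp
  have "\<forall>s. n - int k * int Dm - int q \<le> s \<and> s \<le> n \<longrightarrow> x s = x' s"
    using Suc.prems(2) le by auto
  then have "\<forall>s. n - int k * int Dm - int q \<le> s \<and> s \<le> n - int k * int Dm + int (Suc (k * (q + 1) - 1)) * int d \<longrightarrow> x s = x' s"
    unfolding nn .
  note R = reg_local[OF this]
  have "\<forall>s. (n - int k * int Dm) - int q \<le> s \<and> s \<le> n - int k * int Dm \<longrightarrow> x s = x' s"
  proof (intro allI impI)
    fix s assume "n - int k * int Dm - int q \<le> s \<and> s \<le> n - int k * int Dm"
    moreover have "0 \<le> int k * int Dm" by simp
    ultimately have "n - int ((k + Suc m - 1) * Dm) - int q \<le> s \<and> s \<le> n" using le unfolding of_nat_mult by linarith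
    then show "x s = x' s" using Suc.prems(2) by blast
  qed
  note D = Y_local(3)[OF this]
  have "A x n m (Suc k) = A x' n m (Suc k)"
    using Suc.prems(2) by (intro Suc.IH) auto
  then show ?case using R D by simp
qed

lemma Y_meas[measurable]: "(\<lambda>x. Y1 x t) \<in> borel_measurable (PiM UNIV (\<lambda>_. borel))"
  "(\<lambda>x. Y2 x t) \<in> borel_measurable (PiM UNIV (\<lambda>_. borel))"
  unfolding Y1_def Y2_def by measurable

lemma Dc_meas[measurable]: "Measurable.pred (PiM UNIV (\<lambda>_. borel)) (\<lambda>x. Dc x t)"
  unfolding Dc_def by measurable

lemma reg_meas[measurable]: "Measurable.pred (PiM UNIV (\<lambda>_. borel)) (\<lambda>x. reg x t i)"
  by (induction i) auto

lemma val_meas[measurable]: "(\<lambda>x. val x t i) \<in> borel_measurable (PiM UNIV (\<lambda>_. borel))"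
  unfolding val_def by measurable

lemma A_meas[measurable]: "(\<lambda>x. A x n m k) \<in> borel_measurable (PiM UNIV (\<lambda>_. borel))"
  by (induction m arbitrary: k) auto

lemma badf_meas[measurable]: "Measurable.pred (PiM UNIV (\<lambda>_. borel)) (\<lambda>x. badf x n N)"
  unfolding badf_def by measurable

end


lemma indep_local:
  fixes M :: "'a measure" and e :: "int \<Rightarrow> 'a \<Rightarrow> real" and F G :: "(int \<Rightarrow> real) \<Rightarrow> real"
  assumes P: "prob_space M" and ind: "prob_space.indep_vars M (\<lambda>_. borel) e UNIV"
    and mF: "F \<in> borel_measurable (PiM UNIV (\<lambda>_. borel))"
    and mG: "G \<in> borel_measurable (PiM UNIV (\<lambda>_. borel))"
    and lF: "\<And>x x'. (\<forall>i\<in>S. x i = x' i) \<Longrightarrow> F x = F x'"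
    and lG: "\<And>x x'. (\<forall>i\<in>T. x i = x' i) \<Longrightarrow> G x = G x'"
    and bF: "\<And>x. \<bar>F x\<bar> \<le> 1" and bG: "\<And>x. \<bar>G x\<bar> \<le> 1"
    and ST: "S \<inter> T = {}"
  shows "(\<integral>\<omega>. F (\<lambda>i. e i \<omega>) * G (\<lambda>i. e i \<omega>) \<partial>M) = (\<integral>\<omega>. F (\<lambda>i. e i \<omega>) \<partial>M) * (\<integral>\<omega>. G (\<lambda>i. e i \<omega>) \<partial>M)"
proof -
  interpret prob_space M by (rule P)
  define ext :: "int set \<Rightarrow> (int \<Rightarrow> real) \<Rightarrow> (int \<Rightarrow> real)" where
    "ext U z = (\<lambda>i. if i \<in> U then z i else 0)" for U z
  have mext: "ext U \<in> measurable (PiM U (\<lambda>_. borel)) (PiM UNIV (\<lambda>_. borel))" for U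
  proof -
    have "(\<lambda>z. \<lambda>i\<in>UNIV. (if i \<in> U then z i else 0)) \<in> measurable (PiM U (\<lambda>_. borel)) (PiM UNIV (\<lambda>_. borel :: real measure))"
    proof (rule measurable_restrict)
      fix i :: int
      show "(\<lambda>z. if i \<in> U then z i else 0) \<in> borel_measurable (PiM U (\<lambda>_. borel))"
        by (cases "i \<in> U") auto
    qed
    then show ?thesis unfolding ext_def restrict_UNIV .
  qed
  have ev: "\<And>i. e i \<in> borel_measurable M" using ind unfolding indep_vars_def by auto
  have iv: "indep_var (PiM S (\<lambda>_. borel)) (\<lambda>\<omega>. restrict (\<lambda>i. e i \<omega>) S) (PiM T (\<lambda>_. borel)) (\<lambda>\<omega>. restrict (\<lambda>i. e i \<omega>) T)"
    by (rule indep_var_restrict[OF ind ST]) auto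
  have iv2: "indep_var borel ((F \<circ> ext S) \<circ> (\<lambda>\<omega>. restrict (\<lambda>i. e i \<omega>) S)) borel ((G \<circ> ext T) \<circ> (\<lambda>\<omega>. restrict (\<lambda>i. e i \<omega>) T))"
    by (rule indep_var_compose[OF iv]) (auto intro: measurable_comp[OF mext] mF mG)
  have eqF: "((F \<circ> ext S) \<circ> (\<lambda>\<omega>. restrict (\<lambda>i. e i \<omega>) S)) = (\<lambda>\<omega>. F (\<lambda>i. e i \<omega>))"
    by (rule ext, simp, rule lF) (simp add: ext_def)
  have eqG: "((G \<circ> ext T) \<circ> (\<lambda>\<omega>. restrict (\<lambda>i. e i \<omega>) T)) = (\<lambda>\<omega>. G (\<lambda>i. e i \<omega>))"
    by (rule ext, simp, rule lG) (simp add: ext_def)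
  have mX: "(\<lambda>\<omega>. (\<lambda>i. e i \<omega>)) \<in> measurable M (PiM UNIV (\<lambda>_. borel))"
    using measurable_restrict[of UNIV "\<lambda>i \<omega>. e i \<omega>" M "\<lambda>_. borel"] ev by (simp add: restrict_UNIV)
  have intF: "integrable M (\<lambda>\<omega>. F (\<lambda>i. e i \<omega>))"
    by (rule integrable_const_bound[where B=1]) (auto simp: bF intro!: measurable_compose[OF mX mF])
  have intG: "integrable M (\<lambda>\<omega>. G (\<lambda>i. e i \<omega>))"
    by (rule integrable_const_bound[where B=1]) (auto simp: bG intro!: measurable_compose[OF mX mG])
  show ?thesis
    using indep_var_lebesgue_integral[OF iv2[unfolded eqF eqG] intF intG] .
qed



locale tmap = tma mu1 mu2 phi psi q d r + prob_space M
  for mu1 mu2 :: real and phi psi :: "nat \<Rightarrow> real" and q d :: nat and r :: real and M :: "'a measure" +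
  fixes e :: "int \<Rightarrow> 'a \<Rightarrow> real" and f :: "real \<Rightarrow> real"
  assumes indep: "indep_vars (\<lambda>_. borel) e UNIV"
    and dens: "\<And>n. distributed M lborel (e n) (\<lambda>x. ennreal (f x))"
    and fpos: "\<And>x. f x > 0" and dpos: "d \<ge> 1"
begin

lemma e_meas[measurable]: "e i \<in> borel_measurable M"
  using indep unfolding indep_vars_def by auto

lemma X_meas[measurable]: "(\<lambda>\<omega>. (\<lambda>i. e i \<omega>)) \<in> measurable M (PiM UNIV (\<lambda>_. borel))"
  using measurable_restrict[of UNIV "\<lambda>i \<omega>. e i \<omega>" M "\<lambda>_. borel"] e_meas by (simp add: restrict_UNIV)

lemma f_meas: "(\<lambda>x. ennreal (f x)) \<in> borel_measurable lborel"
  using dens[of 0] unfolding distributed_def by auto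

lemma prob_e: assumes B: "B \<in> sets borel"
  shows "prob (e n -` B \<inter> space M) = prob (e 0 -` B \<inter> space M)"
proof -
  have "prob (e n -` B \<inter> space M) = measure (distr M lborel (e n)) B"
    using B by (subst measure_distr) auto
  also have "\<dots> = measure (distr M lborel (e 0)) B"
    using dens[of n] dens[of 0] unfolding distributed_def by simp
  also have "\<dots> = prob (e 0 -` B \<inter> space M)"
    using B by (subst measure_distr) auto
  finally show ?thesis .
qed

lemma prob_e_pos: assumes B: "B \<in> sets borel" and ab: "\<alpha> < \<beta>" "{\<alpha>..\<beta>} \<subseteq> B"
  shows "prob (e 0 -` B \<inter> space M) > 0"
proof -
  have m: "(\<lambda>x. ennreal (f x) * indicator {\<alpha>..\<beta>} x) \<in> borel_measurable lborel"
    using f_meas by measurable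
  have "(\<integral>\<^sup>+ x. ennreal (f x) * indicator {\<alpha>..\<beta>} x \<partial>lborel) \<noteq> 0"
  proof
    assume "(\<integral>\<^sup>+ x. ennreal (f x) * indicator {\<alpha>..\<beta>} x \<partial>lborel) = 0"
    then have "AE x in lborel. ennreal (f x) * indicator {\<alpha>..\<beta>} x = 0"
      using nn_integral_0_iff_AE[OF m] by simp
    moreover have pt: "ennreal (f x) * indicator {\<alpha>..\<beta>} x = 0 \<Longrightarrow> x \<notin> {\<alpha>..\<beta>}" for x
      using fpos[of x] by (auto simp: indicator_def)
    ultimately have "AE x in lborel. x \<notin> {\<alpha>..\<beta>}"
      by (rule eventually_mono)
    then have "emeasure lborel {\<alpha>..\<beta>} = 0"
      by (subst (asm) AE_iff_measurable[where N="{\<alpha>..\<beta>}"]) auto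
    then show False using ab by simp
  qed
  then have "emeasure (density lborel (\<lambda>x. ennreal (f x))) {\<alpha>..\<beta>} > 0"
    by (subst emeasure_density[OF f_meas]) (auto simp: zero_less_iff_neq_zero)
  also have "\<dots> \<le> emeasure (density lborel (\<lambda>x. ennreal (f x))) B"
    using B ab by (intro emeasure_mono) auto
  also have "\<dots> = emeasure (distr M lborel (e 0)) B"
    using dens[of 0] unfolding distributed_def by simp
  also have "\<dots> = emeasure M (e 0 -` B \<inter> space M)"
    using B by (subst emeasure_distr) auto
  also have "\<dots> = ennreal (prob (e 0 -` B \<inter> space M))"
    by (simp add: emeasure_eq_measure)
  finally show ?thesis by simp
qed

definition pa :: real where "pa = prob (e 0 -` {..r - K0} \<inter> space M)"
definition pb :: real where "pb = prob (e 0 -` {-1..1} \<inter> space M)"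
definition p :: real where "p = pa * pb ^ q"

lemma p_pos: "0 < p"
proof -
  have "0 < pa" unfolding pa_def by (rule prob_e_pos[of _ "r - K0 - 1" "r - K0"]) auto
  moreover have "0 < pb" unfolding pb_def by (rule prob_e_pos[of _ "-1" "1"]) auto
  ultimately show ?thesis unfolding p_def by simp
qed

lemma prob_Dc: "prob {\<omega>\<in>space M. Dc (\<lambda>i. e i \<omega>) t} = p"
proof -
  define J where "J = {t - int q..t}"
  define B where "B s = (if s = t then {..r - K0} else {-1..1::real})" for s
  have fJ: "finite J" "J \<noteq> {}" unfolding J_def by auto
  have set_eq: "{\<omega>\<in>space M. Dc (\<lambda>i. e i \<omega>) t} = (\<Inter>s\<in>J. e s -` B s \<inter> space M)"
  proof -
    have "Dc (\<lambda>i. e i \<omega>) t \<longleftrightarrow> (\<forall>s\<in>J. e s \<omega> \<in> B s)" for \<omega>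
    proof
      assume H: "Dc (\<lambda>i. e i \<omega>) t"
      show "\<forall>s\<in>J. e s \<omega> \<in> B s"
      proof
        fix s assume "s \<in> J"
        show "e s \<omega> \<in> B s"
        proof (cases "s = t")
          case True then show ?thesis using H by (simp add: B_def Dc_def)
        next
          case False
          with \<open>s \<in> J\<close> have "nat (t - s) \<in> {1..q}" "s = t - int (nat (t - s))" unfolding J_def by auto
          then obtain i where i: "i \<in> {1..q}" "s = t - int i" by blast
          have "\<bar>e (t - int i) \<omega>\<bar> \<le> 1" using H i(1) by (auto simp: Dc_def)
          then show ?thesis using i(2) False by (simp add: B_def abs_le_iff)
        qed
      qed
    next
      assume H: "\<forall>s\<in>J. e s \<omega> \<in> B s"
      have "e t \<omega> \<in> B t" using H by (auto simp: J_def)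
      moreover have "\<bar>e (t - int i) \<omega>\<bar> \<le> 1" if "i \<in> {1..q}" for i
      proof -
        have "t - int i \<in> J" "t - int i \<noteq> t" using that by (auto simp: J_def)
        then show ?thesis using H by (auto simp: B_def abs_le_iff)
      qed
      ultimately show "Dc (\<lambda>i. e i \<omega>) t" by (auto simp: Dc_def B_def)
    qed
    then show ?thesis using fJ by auto
  qed
  have "prob (\<Inter>s\<in>J. e s -` B s \<inter> space M) = (\<Prod>s\<in>J. prob (e s -` B s \<inter> space M))"
    by (rule indep_varsD[OF indep]) (auto simp: fJ B_def)
  also have "\<dots> = (\<Prod>s\<in>J. if s = t then pa else pb)"
  proof (rule prod.cong)
    fix s assume "s \<in> J"
    have "prob (e s -` B s \<inter> space M) = prob (e 0 -` B s \<inter> space M)"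
      by (rule prob_e) (simp add: B_def)
    then show "prob (e s -` B s \<inter> space M) = (if s = t then pa else pb)"
      by (simp add: B_def pa_def pb_def)
  qed simp
  also have "\<dots> = pa * pb ^ q"
  proof -
    have tJ: "t \<in> J" unfolding J_def by auto
    have "(\<Prod>s\<in>J. if s = t then pa else pb) = pa * (\<Prod>s\<in>J - {t}. if s = t then pa else pb)"
      using fJ tJ by (subst prod.remove[of _ t]) auto
    also have "(\<Prod>s\<in>J - {t}. if s = t then pa else pb) = pb ^ card (J - {t})"
      by simp
    also have "card (J - {t}) = q" using tJ fJ unfolding J_def by simp
    finally show ?thesis by simp
  qed
  finally show ?thesis using set_eq by (simp add: p_def)
qed

end


lemma (in prob_space) probP:
  assumes "Measurable.pred M P"
  shows "prob {\<omega>\<in>space M. P \<omega>} = (\<integral>\<omega>. (if P \<omega> then 1 else 0) \<partial>M)"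
proof -
  have "(\<integral>\<omega>. (if P \<omega> then 1 else 0) \<partial>M) = (\<integral>\<omega>. indicator {\<omega>\<in>space M. P \<omega>} \<omega> \<partial>M)"
    by (rule Bochner_Integration.integral_cong) (auto simp: indicator_def)
  also have "\<dots> = prob {\<omega>\<in>space M. P \<omega>}"
    by (simp add: Int_absorb2)
  finally show ?thesis by simp
qed

lemma (in prob_space) cov_bound:
  fixes a b a' b' :: "'a \<Rightarrow> real"
  assumes ma[measurable]: "a \<in> borel_measurable M" and mb[measurable]: "b \<in> borel_measurable M"
    and ma'[measurable]: "a' \<in> borel_measurable M" and mb'[measurable]: "b' \<in> borel_measurable M"
    and ba: "\<And>\<omega>. 0 \<le> a \<omega> \<and> a \<omega> \<le> 1" and bb: "\<And>\<omega>. 0 \<le> b \<omega> \<and> b \<omega> \<le> 1"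
    and ba': "\<And>\<omega>. 0 \<le> a' \<omega> \<and> a' \<omega> \<le> 1" and bb': "\<And>\<omega>. 0 \<le> b' \<omega> \<and> b' \<omega> \<le> 1"
    and E1[measurable]: "E1 \<in> events" and E2[measurable]: "E2 \<in> events"
    and d1: "AE \<omega> in M. a \<omega> \<noteq> a' \<omega> \<longrightarrow> \<omega> \<in> E1"
    and d2: "AE \<omega> in M. b \<omega> \<noteq> b' \<omega> \<longrightarrow> \<omega> \<in> E2"
    and ind: "(\<integral>\<omega>. a' \<omega> * b' \<omega> \<partial>M) = expectation a' * expectation b'"
  shows "\<bar>covariance M a b\<bar> \<le> 2 * (prob E1 + prob E2)"
proof -
  have int: "integrable M g" if "g \<in> borel_measurable M" "\<And>\<omega>. \<bar>g \<omega>\<bar> \<le> 1" for g :: "'a \<Rightarrow> real"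
    by (rule integrable_const_bound[where B=1]) (use that in auto)
  have ia: "integrable M a" by (rule int) (use ba in auto)
  have ib: "integrable M b" by (rule int) (use bb in auto)
  have ia': "integrable M a'" by (rule int) (use ba' in auto)
  have ib': "integrable M b'" by (rule int) (use bb' in auto)
  have iab: "integrable M (\<lambda>\<omega>. a \<omega> * b \<omega>)"
    by (rule int) (use ba bb in \<open>auto simp: abs_mult intro: mult_le_one\<close>)
  have iab': "integrable M (\<lambda>\<omega>. a' \<omega> * b' \<omega>)"
    by (rule int) (use ba' bb' in \<open>auto simp: abs_mult intro: mult_le_one\<close>)
  have i1: "integrable M (indicator E1 :: 'a \<Rightarrow> real)" and i2: "integrable M (indicator E2 :: 'a \<Rightarrow> real)"
    by (auto intro!: int)
  define \<alpha> where "\<alpha> = expectation a"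
  define \<beta> where "\<beta> = expectation b"
  have cov: "covariance M a b = (\<integral>\<omega>. a \<omega> * b \<omega> \<partial>M) - \<alpha> * \<beta>"
  proof -
    have "(\<lambda>\<omega>. (a \<omega> - \<alpha>) * (b \<omega> - \<beta>)) = (\<lambda>\<omega>. a \<omega> * b \<omega> - \<alpha> * b \<omega> - \<beta> * a \<omega> + \<alpha> * \<beta>)"
      by (auto simp: algebra_simps)
    then have "covariance M a b = (\<integral>\<omega>. a \<omega> * b \<omega> - \<alpha> * b \<omega> - \<beta> * a \<omega> + \<alpha> * \<beta> \<partial>M)"
      unfolding covariance_def \<alpha>_def \<beta>_def by simp
    also have "\<dots> = (\<integral>\<omega>. a \<omega> * b \<omega> \<partial>M) - \<alpha> * \<beta> - \<beta> * \<alpha> + \<alpha> * \<beta>"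
      using iab ia ib by (simp add: \<alpha>_def \<beta>_def prob_space)
    finally show ?thesis by simp
  qed
  have abs_exp: "\<bar>expectation g\<bar> \<le> 1" if "g \<in> borel_measurable M" "\<And>\<omega>. 0 \<le> g \<omega> \<and> g \<omega> \<le> 1" for g :: "'a \<Rightarrow> real"
  proof -
    have ig: "integrable M g" by (rule int) (use that in \<open>auto simp: abs_le_iff\<close>)
    have "0 \<le> expectation g" by (rule Bochner_Integration.integral_nonneg) (use that in auto)
    moreover have "expectation g \<le> expectation (\<lambda>_. 1)"
      by (rule integral_mono) (use that ig in auto)
    ultimately show ?thesis by (simp add: prob_space)
  qed
  have diff: "\<bar>expectation g - expectation g'\<bar> \<le> prob E"
    if m: "g \<in> borel_measurable M" "g' \<in> borel_measurable M" and "E \<in> events"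
      and bg: "\<And>\<omega>. 0 \<le> g \<omega> \<and> g \<omega> \<le> 1" "\<And>\<omega>. 0 \<le> g' \<omega> \<and> g' \<omega> \<le> 1"
      and ae: "AE \<omega> in M. g \<omega> \<noteq> g' \<omega> \<longrightarrow> \<omega> \<in> E" for g g' :: "'a \<Rightarrow> real" and E
  proof -
    have ig: "integrable M g" "integrable M g'" by (auto intro!: int m) (use bg in \<open>auto simp: abs_le_iff\<close>)
    have "\<bar>expectation g - expectation g'\<bar> = \<bar>expectation (\<lambda>\<omega>. g \<omega> - g' \<omega>)\<bar>"
      using ig by simp
    also have "\<dots> \<le> expectation (\<lambda>\<omega>. \<bar>g \<omega> - g' \<omega>\<bar>)"
      using ig by (intro integral_abs_bound) 
    also have "\<dots> \<le> expectation (indicator E)"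
    proof (rule integral_mono_AE)
      show "integrable M (\<lambda>\<omega>. \<bar>g \<omega> - g' \<omega>\<bar>)" using ig by auto
      show "integrable M (indicator E :: 'a \<Rightarrow> real)" using \<open>E \<in> events\<close> by (auto intro!: int)
      show "AE \<omega> in M. \<bar>g \<omega> - g' \<omega>\<bar> \<le> indicator E \<omega>"
        using ae
      proof eventually_elim
        case (elim \<omega>)
        show ?case using elim bg(1)[of \<omega>] bg(2)[of \<omega>] by (auto simp: indicator_def abs_le_iff)
      qed
    qed
    also have "\<dots> = prob E" using \<open>E \<in> events\<close> by simp
    finally show ?thesis .
  qed
  have D1: "\<bar>(\<integral>\<omega>. a \<omega> * b \<omega> \<partial>M) - (\<integral>\<omega>. a' \<omega> * b' \<omega> \<partial>M)\<bar> \<le> prob E1 + prob E2"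
  proof -
    have "\<bar>(\<integral>\<omega>. a \<omega> * b \<omega> \<partial>M) - (\<integral>\<omega>. a' \<omega> * b' \<omega> \<partial>M)\<bar> = \<bar>\<integral>\<omega>. a \<omega> * b \<omega> - a' \<omega> * b' \<omega> \<partial>M\<bar>"
      using iab iab' by simp
    also have "\<dots> \<le> (\<integral>\<omega>. \<bar>a \<omega> * b \<omega> - a' \<omega> * b' \<omega>\<bar> \<partial>M)"
      using iab iab' by (intro integral_abs_bound)
    also have "\<dots> \<le> (\<integral>\<omega>. indicator E1 \<omega> + indicator E2 \<omega> \<partial>M)"
    proof (rule integral_mono_AE)
      show "integrable M (\<lambda>\<omega>. \<bar>a \<omega> * b \<omega> - a' \<omega> * b' \<omega>\<bar>)" using iab iab' by auto
      show "integrable M (\<lambda>\<omega>. indicator E1 \<omega> + indicator E2 \<omega> :: real)" using i1 i2 by auto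
      show "AE \<omega> in M. \<bar>a \<omega> * b \<omega> - a' \<omega> * b' \<omega>\<bar> \<le> indicator E1 \<omega> + indicator E2 \<omega>"
        using d1 d2
      proof eventually_elim
        case (elim \<omega>)
        have h: "\<bar>a \<omega> * b \<omega> - a' \<omega> * b' \<omega>\<bar> \<le> 1"
          using ba[of \<omega>] bb[of \<omega>] ba'[of \<omega>] bb'[of \<omega>]
          by (smt (verit) mult_le_one mult_nonneg_nonneg)
        show ?case
        proof (cases "a \<omega> = a' \<omega> \<and> b \<omega> = b' \<omega>")
          case True then show ?thesis by (simp add: indicator_def)
        next
          case False then show ?thesis using elim h by (auto simp: indicator_def)
        qed
      qed
    qed
    also have "\<dots> = prob E1 + prob E2" using i1 i2 by simp
    finally show ?thesis .
  qed
  have D2: "\<bar>\<alpha> * \<beta> - expectation a' * expectation b'\<bar> \<le> prob E1 + prob E2"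
  proof -
    have "\<alpha> * \<beta> - expectation a' * expectation b' = \<alpha> * (\<beta> - expectation b') + expectation b' * (\<alpha> - expectation a')"
      by (simp add: algebra_simps)
    moreover have "\<bar>\<alpha>\<bar> \<le> 1" "\<bar>expectation b'\<bar> \<le> 1" unfolding \<alpha>_def by (auto intro!: abs_exp ba bb')
    moreover have "\<bar>\<beta> - expectation b'\<bar> \<le> prob E2" unfolding \<beta>_def by (rule diff) (use bb bb' d2 in auto)
    moreover have "\<bar>\<alpha> - expectation a'\<bar> \<le> prob E1" unfolding \<alpha>_def by (rule diff) (use ba ba' d1 in auto)
    moreover have "\<bar>\<alpha> * (\<beta> - expectation b')\<bar> \<le> \<bar>\<beta> - expectation b'\<bar>"
      using \<open>\<bar>\<alpha>\<bar> \<le> 1\<close> by (simp add: abs_mult mult_left_le_one_le)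
    moreover have "\<bar>expectation b' * (\<alpha> - expectation a')\<bar> \<le> \<bar>\<alpha> - expectation a'\<bar>"
      using \<open>\<bar>expectation b'\<bar> \<le> 1\<close> by (simp add: abs_mult mult_left_le_one_le)
    ultimately show ?thesis by linarith
  qed
  show ?thesis using cov D1 D2 ind by (smt (verit))
qed



context tmap begin

lemma Dm_gt: "q < Dm"
proof -
  have "q + 1 \<le> d * (q + 1)" using mult_le_mono1[OF dpos, of "q+1"] by simp
  then show ?thesis unfolding Dm_def by simp
qed

lemma badf_local: "(\<forall>s\<in>{n - int (N * Dm) - int q..n}. x s = x' s) \<Longrightarrow> badf x n N = badf x' n N"
proof -
  assume H: "\<forall>s\<in>{n - int (N * Dm) - int q..n}. x s = x' s"
  have "Dc x (n - int j * int Dm) = Dc x' (n - int j * int Dm)" if "j \<in> {1..N}" for j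
  proof (rule Y_local(3), intro allI impI)
    fix s assume s: "n - int j * int Dm - int q \<le> s \<and> s \<le> n - int j * int Dm"
    have "int j * int Dm \<le> int N * int Dm" using that by (intro mult_right_mono) auto
    moreover have "0 \<le> int j * int Dm" by simp
    ultimately have "s \<in> {n - int (N * Dm) - int q..n}" using s unfolding of_nat_mult atLeastAtMost_iff by linarith
    then show "x s = x' s" using H by blast
  qed
  then show ?thesis unfolding badf_def by auto
qed

lemma prob_bad: "prob {\<omega>\<in>space M. badf (\<lambda>i. e i \<omega>) n N} = (1 - p) ^ N"
proof (induction N)
  case 0
  then show ?case by (simp add: badf_def prob_space)
next
  case (Suc N)
  define t where "t = n - int (Suc N) * int Dm"
  define F where "F x = (if badf x n N then 1 else 0 :: real)" for x
  define G where "G x = (if Dc x t then 0 else 1 :: real)" for x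
  have [measurable]: "F \<in> borel_measurable (PiM UNIV (\<lambda>_. borel))" unfolding F_def by measurable
  have [measurable]: "G \<in> borel_measurable (PiM UNIV (\<lambda>_. borel))" unfolding G_def by measurable
  have disj: "{n - int (N * Dm) - int q..n} \<inter> {t - int q..t} = {}"
    using Dm_gt unfolding t_def by (auto simp: algebra_simps)
  have indep_eq: "(\<integral>\<omega>. F (\<lambda>i. e i \<omega>) * G (\<lambda>i. e i \<omega>) \<partial>M) = (\<integral>\<omega>. F (\<lambda>i. e i \<omega>) \<partial>M) * (\<integral>\<omega>. G (\<lambda>i. e i \<omega>) \<partial>M)"
  proof (rule indep_local[OF prob_space_axioms indep _ _ _ _ _ _ disj])
    show "F x = F x'" if "\<forall>i\<in>{n - int (N * Dm) - int q..n}. x i = x' i" for x x'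
      unfolding F_def using badf_local[OF that] by simp
    show "G x = G x'" if "\<forall>i\<in>{t - int q..t}. x i = x' i" for x x'
      unfolding G_def using Y_local(3)[of t x x'] that by auto
  qed (auto simp: F_def G_def)
  have "prob {\<omega>\<in>space M. badf (\<lambda>i. e i \<omega>) n (Suc N)} = (\<integral>\<omega>. (if badf (\<lambda>i. e i \<omega>) n (Suc N) then 1 else 0) \<partial>M)"
    by (rule probP) measurable
  also have "\<dots> = (\<integral>\<omega>. F (\<lambda>i. e i \<omega>) * G (\<lambda>i. e i \<omega>) \<partial>M)"
  proof (rule Bochner_Integration.integral_cong[OF refl])
    fix \<omega>
    have "badf x n (Suc N) = (badf x n N \<and> \<not> Dc x t)" for x
    proof -
      have "{1..Suc N} = insert (Suc N) {1..N}" by auto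
      then show ?thesis unfolding badf_def t_def by (simp add: conj_commute)
    qed
    then show "(if badf (\<lambda>i. e i \<omega>) n (Suc N) then 1 else 0) = F (\<lambda>i. e i \<omega>) * G (\<lambda>i. e i \<omega>)"
      unfolding F_def G_def by simp
  qed
  also have "\<dots> = (1 - p) ^ N * (1 - p)"
  proof -
    have "(\<integral>\<omega>. F (\<lambda>i. e i \<omega>) \<partial>M) = prob {\<omega>\<in>space M. badf (\<lambda>i. e i \<omega>) n N}"
      unfolding F_def by (rule probP[symmetric]) measurable
    moreover have "(\<integral>\<omega>. G (\<lambda>i. e i \<omega>) \<partial>M) = 1 - prob {\<omega>\<in>space M. Dc (\<lambda>i. e i \<omega>) t}"
    proof -
      have "(\<integral>\<omega>. G (\<lambda>i. e i \<omega>) \<partial>M) = (\<integral>\<omega>. 1 - (if Dc (\<lambda>i. e i \<omega>) t then 1 else 0) \<partial>M)"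
        unfolding G_def by (rule Bochner_Integration.integral_cong) auto
      also have "\<dots> = 1 - (\<integral>\<omega>. (if Dc (\<lambda>i. e i \<omega>) t then 1 else 0) \<partial>M)"
        by (subst Bochner_Integration.integral_diff) (auto simp: prob_space intro!: integrable_const_bound[where B=1])
      also have "(\<integral>\<omega>. (if Dc (\<lambda>i. e i \<omega>) t then 1 else 0) \<partial>M) = prob {\<omega>\<in>space M. Dc (\<lambda>i. e i \<omega>) t}"
        by (rule probP[symmetric]) measurable
      finally show ?thesis .
    qed
    ultimately show ?thesis using indep_eq Suc.IH prob_Dc by simp
  qed
  finally show ?case by simp
qed

lemma approx:
  fixes y :: "int \<Rightarrow> 'a \<Rightarrow> real"
  assumes rec: "AE \<omega> in M. \<forall>n. y n \<omega> = (if y (n - int d) \<omega> \<le> r then Y1 (\<lambda>i. e i \<omega>) n else Y2 (\<lambda>i. e i \<omega>) n)"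
  shows "AE \<omega> in M. y n \<omega> \<noteq> A (\<lambda>i. e i \<omega>) n N 1 \<longrightarrow> badf (\<lambda>i. e i \<omega>) n N"
  using rec
proof eventually_elim
  case (elim \<omega>)
  show ?case
  proof (intro impI, rule ccontr)
    assume ne: "y n \<omega> \<noteq> A (\<lambda>i. e i \<omega>) n N 1" and nb: "\<not> badf (\<lambda>i. e i \<omega>) n N"
    from nb obtain j where "j \<in> {1..N}" "Dc (\<lambda>i. e i \<omega>) (n - int j * int Dm)" unfolding badf_def by auto
    then have ex: "\<exists>j. 1 \<le> j \<and> j < 1 + N \<and> Dc (\<lambda>i. e i \<omega>) (n - int j * int Dm)" by auto
    have rec': "\<And>m. y m \<omega> = (if y (m - int d) \<omega> \<le> r then Y1 (\<lambda>i. e i \<omega>) m else Y2 (\<lambda>i. e i \<omega>) m)"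
      using elim by blast
    have "A (\<lambda>i. e i \<omega>) n N 1 = y n \<omega>"
      using det2[of "\<lambda>m. y m \<omega>", OF rec' order.refl ex] by simp
    then show False using ne by simp
  qed
qed

end


lemma ind_meas[measurable]: "ind_interval u1 u2 \<in> borel_measurable borel"
  unfolding ind_interval_def by measurable

lemma ind_bd: "0 \<le> ind_interval u1 u2 x \<and> ind_interval u1 u2 x \<le> 1"
  unfolding ind_interval_def by auto

context tmap begin

lemma cov_k:
  fixes y :: "int \<Rightarrow> 'a \<Rightarrow> real"
  assumes rec: "AE \<omega> in M. \<forall>n. y n \<omega> = (if y (n - int d) \<omega> \<le> r then Y1 (\<lambda>i. e i \<omega>) n else Y2 (\<lambda>i. e i \<omega>) n)"
    and ym[measurable]: "\<And>n. y n \<in> borel_measurable M"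
    and kN: "N * Dm + q < k"
  shows "\<bar>covariance M (\<lambda>\<omega>. ind_interval u1 u2 (y 0 \<omega>)) (\<lambda>\<omega>. ind_interval v1 v2 (y (int k) \<omega>))\<bar> \<le> 4 * (1 - p) ^ N"
proof -
  define E1 where "E1 = {\<omega>\<in>space M. badf (\<lambda>i. e i \<omega>) 0 N}"
  define E2 where "E2 = {\<omega>\<in>space M. badf (\<lambda>i. e i \<omega>) (int k) N}"
  have pb: "Measurable.pred M (\<lambda>\<omega>. badf (\<lambda>i. e i \<omega>) n N)" for n
    by (rule measurable_compose[OF X_meas badf_meas])
  have evs[measurable]: "E1 \<in> events" "E2 \<in> events" unfolding E1_def E2_def using pb unfolding pred_def by auto
  have "\<bar>covariance M (\<lambda>\<omega>. ind_interval u1 u2 (y 0 \<omega>)) (\<lambda>\<omega>. ind_interval v1 v2 (y (int k) \<omega>))\<bar> \<le> 2 * (prob E1 + prob E2)"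
  proof (rule cov_bound[where a'="\<lambda>\<omega>. ind_interval u1 u2 (A (\<lambda>i. e i \<omega>) 0 N 1)"
        and b'="\<lambda>\<omega>. ind_interval v1 v2 (A (\<lambda>i. e i \<omega>) (int k) N 1)"])
    show "AE \<omega> in M. ind_interval u1 u2 (y 0 \<omega>) \<noteq> ind_interval u1 u2 (A (\<lambda>i. e i \<omega>) 0 N 1) \<longrightarrow> \<omega> \<in> E1"
      using approx[OF rec, of 0 N] AE_space by eventually_elim (auto simp: E1_def)
    show "AE \<omega> in M. ind_interval v1 v2 (y (int k) \<omega>) \<noteq> ind_interval v1 v2 (A (\<lambda>i. e i \<omega>) (int k) N 1) \<longrightarrow> \<omega> \<in> E2"
      using approx[OF rec, of "int k" N] AE_space by eventually_elim (auto simp: E2_def)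
    show "(\<integral>\<omega>. ind_interval u1 u2 (A (\<lambda>i. e i \<omega>) 0 N 1) * ind_interval v1 v2 (A (\<lambda>i. e i \<omega>) (int k) N 1) \<partial>M) =
      expectation (\<lambda>\<omega>. ind_interval u1 u2 (A (\<lambda>i. e i \<omega>) 0 N 1)) * expectation (\<lambda>\<omega>. ind_interval v1 v2 (A (\<lambda>i. e i \<omega>) (int k) N 1))"
    proof (rule indep_local[OF prob_space_axioms indep, where S="{0 - int (N * Dm) - int q..0}" and T="{int k - int (N * Dm) - int q..int k}"])
      show "ind_interval u1 u2 (A x 0 N 1) = ind_interval u1 u2 (A x' 0 N 1)"
        if "\<forall>i\<in>{0 - int (N * Dm) - int q..0}. x i = x' i" for x x'
        using A_local[of 1 0 N x x'] that by simp
      show "ind_interval v1 v2 (A x (int k) N 1) = ind_interval v1 v2 (A x' (int k) N 1)"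
        if "\<forall>i\<in>{int k - int (N * Dm) - int q..int k}. x i = x' i" for x x'
        using A_local[of 1 "int k" N x x'] that by simp
      show "{0 - int (N * Dm) - int q..0} \<inter> {int k - int (N * Dm) - int q..int k} = {}"
      proof -
        have "int (N * Dm + q) < int k" using kN by (simp only: of_nat_less_iff)
        then have "int N * int Dm + int q < int k" by simp
        then show ?thesis by auto
      qed
      show "(\<lambda>x. ind_interval u1 u2 (A x 0 N 1)) \<in> borel_measurable (PiM UNIV (\<lambda>_. borel))" by measurable
      show "(\<lambda>x. ind_interval v1 v2 (A x (int k) N 1)) \<in> borel_measurable (PiM UNIV (\<lambda>_. borel))" by measurable
      show "\<bar>ind_interval u1 u2 (A x 0 N 1)\<bar> \<le> 1" for x using ind_bd[of u1 u2 "A x 0 N 1"] by simp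
      show "\<bar>ind_interval v1 v2 (A x (int k) N 1)\<bar> \<le> 1" for x using ind_bd[of v1 v2 "A x (int k) N 1"] by simp
    qed
    show "(\<lambda>\<omega>. ind_interval u1 u2 (y 0 \<omega>)) \<in> borel_measurable M"
      by (rule measurable_compose[OF ym ind_meas])
    show "(\<lambda>\<omega>. ind_interval v1 v2 (y (int k) \<omega>)) \<in> borel_measurable M"
      by (rule measurable_compose[OF ym ind_meas])
    show "(\<lambda>\<omega>. ind_interval u1 u2 (A (\<lambda>i. e i \<omega>) 0 N 1)) \<in> borel_measurable M"
      by (rule measurable_compose[OF measurable_compose[OF X_meas A_meas] ind_meas])
    show "(\<lambda>\<omega>. ind_interval v1 v2 (A (\<lambda>i. e i \<omega>) (int k) N 1)) \<in> borel_measurable M"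
      by (rule measurable_compose[OF measurable_compose[OF X_meas A_meas] ind_meas])
  qed (simp_all only: ind_bd evs)
  also have "\<dots> = 4 * (1 - p) ^ N"
    unfolding E1_def E2_def prob_bad by simp
  finally show ?thesis .
qed

end


theorem mainTheorem4:
  fixes M :: "'a measure"
    and e y :: "int \<Rightarrow> 'a \<Rightarrow> real"
    and f :: "real \<Rightarrow> real"
    and q d :: nat
    and r \<mu>1 \<mu>2 :: real
    and \<phi> \<psi> :: "nat \<Rightarrow> real"
  assumes prob: "prob_space M"
    and indep: "prob_space.indep_vars M (\<lambda>_. borel) e UNIV"
    and dens: "\<And>n. distributed M lborel (e n) (\<lambda>x. ennreal (f x))"
    and f_cont: "continuous_on UNIV f"
    and f_bdd: "bounded (range f)"
    and f_pos: "\<And>x. f x > 0"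
    and q_pos: "q \<ge> 1" and d_pos: "d \<ge> 1"
    and y_rv: "\<And>n. y n \<in> borel_measurable M"
    and y_eq: "\<And>n. AE \<omega> in M. y n \<omega> =
                 (if y (n - int d) \<omega> \<le> r
                  then \<mu>1 + e n \<omega> + (\<Sum>i=1..q. \<phi> i * e (n - int i) \<omega>)
                  else \<mu>2 + e n \<omega> + (\<Sum>i=1..q. \<psi> i * e (n - int i) \<omega>))"
    and y_stat: "strictly_stationary M y"
  shows "\<exists>\<rho>::real. 0 < \<rho> \<and> \<rho> < 1 \<and>
           (\<forall>u1 u2 v1 v2 :: ereal. u1 < u2 \<longrightarrow> v1 < v2 \<longrightarrow>
              (\<lambda>k::nat. covariance M (\<lambda>\<omega>. ind_interval u1 u2 (y 0 \<omega>))
                                      (\<lambda>\<omega>. ind_interval v1 v2 (y (int k) \<omega>)))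
              \<in> O(\<lambda>k. \<rho> ^ k))"
proof -
  interpret tmap \<mu>1 \<mu>2 \<phi> \<psi> q d r M e f
    by (intro tmap.intro tmap_axioms.intro prob indep dens f_pos d_pos)
  have rec: "AE \<omega> in M. \<forall>n. y n \<omega> = (if y (n - int d) \<omega> \<le> r then Y1 (\<lambda>i. e i \<omega>) n else Y2 (\<lambda>i. e i \<omega>) n)"
    unfolding Y1_def Y2_def AE_all_countable using y_eq by blast
  have p1: "p \<le> 1" using prob_Dc[of 0] prob_le_1 by metis
  define \<beta> where "\<beta> = max (1 - p) (1/2)"
  have \<beta>: "1/2 \<le> \<beta>" "\<beta> < 1" "1 - p \<le> \<beta>" using p_pos unfolding \<beta>_def by auto
  have Dm0: "0 < Dm" using Dm_gt by simp
  define \<rho> where "\<rho> = root Dm \<beta>"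
  have \<rho>0: "0 < \<rho>" unfolding \<rho>_def using Dm0 \<beta> by simp
  have \<rho>1: "\<rho> < 1" unfolding \<rho>_def using Dm0 \<beta> by simp
  have \<rho>D: "\<rho> ^ Dm = \<beta>" unfolding \<rho>_def using Dm0 \<beta> by (simp add: real_root_pow_pos2)
  show ?thesis
  proof (intro exI[of _ \<rho>] conjI allI impI \<rho>0 \<rho>1)
    fix u1 u2 v1 v2 :: ereal
    show "(\<lambda>k::nat. covariance M (\<lambda>\<omega>. ind_interval u1 u2 (y 0 \<omega>))
                                      (\<lambda>\<omega>. ind_interval v1 v2 (y (int k) \<omega>))) \<in> O(\<lambda>k. \<rho> ^ k)"
    proof (rule bigoI[where c = "4 / \<rho> ^ (q + Dm)"])
      show "eventually (\<lambda>k. norm (covariance M (\<lambda>\<omega>. ind_interval u1 u2 (y 0 \<omega>))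
                                      (\<lambda>\<omega>. ind_interval v1 v2 (y (int k) \<omega>))) \<le> 4 / \<rho> ^ (q + Dm) * norm (\<rho> ^ k)) at_top"
        unfolding eventually_at_top_linorder
      proof (intro exI[of _ "q + Dm + 1"] allI impI)
        fix k :: nat assume k: "q + Dm + 1 \<le> k"
        define N where "N = (k - q - 1) div Dm"
        have a1: "N * Dm \<le> k - q - 1" unfolding N_def by (rule div_times_less_eq_dividend)
        have a2: "k - q - 1 < N * Dm + Dm"
        proof -
          have "k - q - 1 = N * Dm + (k - q - 1) mod Dm" unfolding N_def by (rule div_mult_mod_eq[symmetric])
          moreover have "(k - q - 1) mod Dm < Dm" using Dm0 by simp
          ultimately show ?thesis by linarith
        qed
        have kN: "N * Dm + q < k" using a1 k by linarith
        have c: "\<bar>covariance M (\<lambda>\<omega>. ind_interval u1 u2 (y 0 \<omega>)) (\<lambda>\<omega>. ind_interval v1 v2 (y (int k) \<omega>))\<bar> \<le> 4 * (1 - p) ^ N"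
          by (rule cov_k[OF rec y_rv kN])
        have "(1 - p) ^ N \<le> \<beta> ^ N" using p1 \<beta> by (intro power_mono) auto
        also have "\<dots> = \<rho> ^ (Dm * N)" by (simp add: power_mult \<rho>D)
        also have "\<dots> \<le> \<rho> ^ (k - (q + Dm))"
        proof (rule power_decreasing)
          have "k - (q + Dm) \<le> N * Dm" using a2 k by linarith
          then show "k - (q + Dm) \<le> Dm * N" by (simp add: mult.commute)
        qed (use \<rho>0 \<rho>1 in auto)
        also have "\<dots> = \<rho> ^ k / \<rho> ^ (q + Dm)"
        proof -
          have "\<rho> ^ k = \<rho> ^ (k - (q + Dm)) * \<rho> ^ (q + Dm)"
            using k by (simp flip: power_add)
          then show ?thesis using \<rho>0 by simp
        qed
        finally have "(1 - p) ^ N \<le> \<rho> ^ k / \<rho> ^ (q + Dm)" .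
        then show "norm (covariance M (\<lambda>\<omega>. ind_interval u1 u2 (y 0 \<omega>))
                                      (\<lambda>\<omega>. ind_interval v1 v2 (y (int k) \<omega>))) \<le> 4 / \<rho> ^ (q + Dm) * norm (\<rho> ^ k)"
          using c \<rho>0 by simp
      qed
    qed
  qed
qed


end
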